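(* If two weighted hybrid graphs (with positive edge weights) have identical vertex sets and identical $L$-edge and $Q$-edge sets, then their hybrid Laplacians have identical kernels.
   Context: A weighted hybrid graph $G=(V,E_L+E_Q)$ has a set $E_L$ of $L$-edges and a set $E_Q$ of $Q$-edges, each edge with a positive weight. Its hybrid Laplacian is $\mathcal{L}(G)=L(S_l)+Q(S_q)$ with $S_l=(V,E_L)$, $S_q=(V,E_Q)$, where for a weighted graph $L=D-A$ and $Q=D+A$ with $A$ the weighted adjacency matrix and $D$ the diagonal matrix of weighted degrees. The edge weights of the two graphs may differ. *)

theory Defs
  imports "HOL-Analysis.Analysis"
begin

text \<open>An (undirected, simple) edge is a
 two-element set of vertices; a weighted edge set is a set E of such edges together with a
 weight function w, positive on E.\<close>

definition wadj :: "'n::finite set set \<Rightarrow> ('n set \<Rightarrow> real) \<Rightarrow> real^'n^'n" where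
  "wadj E w = (\<chi> i j. if {i, j} \<in> E then w {i, j} else 0)"

definition wdeg :: "'n::finite set set \<Rightarrow> ('n set \<Rightarrow> real) \<Rightarrow> real^'n^'n" where
  "wdeg E w = (\<chi> i j. if i = j then (\<Sum>k\<in>UNIV. wadj E w $ i $ k) else 0)"

definition laplacian :: "'n::finite set set \<Rightarrow> ('n set \<Rightarrow> real) \<Rightarrow> real^'n^'n" where
  "laplacian E w = wdeg E w - wadj E w"

definition signless_laplacian :: "'n::finite set set \<Rightarrow> ('n set \<Rightarrow> real) \<Rightarrow> real^'n^'n" where
  "signless_laplacian E w = wdeg E w + wadj E w"

definition weighted_hybrid_graph ::
  "'n::finite set set \<Rightarrow> 'n set set \<Rightarrow> ('n set \<Rightarrow> real) \<Rightarrow> ('n set \<Rightarrow> real) \<Rightarrow> bool" where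
  "weighted_hybrid_graph E_L E_Q wl wq \<longleftrightarrow>
     (\<forall>e \<in> E_L \<union> E_Q. card e = 2) \<and> E_L \<inter> E_Q = {} \<and>
     (\<forall>e \<in> E_L. wl e > 0) \<and> (\<forall>e \<in> E_Q. wq e > 0)"

definition hybrid_laplacian ::
  "'n::finite set set \<Rightarrow> 'n set set \<Rightarrow> ('n set \<Rightarrow> real) \<Rightarrow> ('n set \<Rightarrow> real) \<Rightarrow> real^'n^'n" where
  "hybrid_laplacian E_L E_Q wl wq = laplacian E_L wl + signless_laplacian E_Q wq"

definition mat_kernel :: "real^'n^'m \<Rightarrow> (real^'n) set" where
  "mat_kernel M = {x. M *v x = 0}"

end

theory Submission
  imports Defs
begin

lemma wadj_sym: "wadj E w $ i $ k = wadj E w $ k $ i"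
  unfolding wadj_def by (simp add: insert_commute)

lemma wadj_nonneg: "\<forall>e\<in>E. w e > 0 \<Longrightarrow> wadj E w $ i $ k \<ge> 0"
  unfolding wadj_def by (auto intro: less_imp_le)

lemma wadj_pos: "\<forall>e\<in>E. w e > 0 \<Longrightarrow> {i,k} \<in> E \<Longrightarrow> wadj E w $ i $ k > 0"
  unfolding wadj_def by auto

lemma wdeg_row: "(wdeg E w *v x) $ i = (\<Sum>k\<in>UNIV. wadj E w $ i $ k) * x $ i"
proof -
  have "(\<Sum>j\<in>UNIV. (if i = j then (\<Sum>k\<in>UNIV. wadj E w $ i $ k) else 0) * x $ j)
      = (\<Sum>j\<in>UNIV. if i = j then (\<Sum>k\<in>UNIV. wadj E w $ i $ k) * x $ j else 0)"
    by (rule sum.cong) auto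
  also have "\<dots> = (\<Sum>k\<in>UNIV. wadj E w $ i $ k) * x $ i" by simp
  finally have X: "(\<Sum>j\<in>UNIV. (if i = j then (\<Sum>k\<in>UNIV. wadj E w $ i $ k) else 0) * x $ j)
     = (\<Sum>k\<in>UNIV. wadj E w $ i $ k) * x $ i" .
  show ?thesis unfolding wdeg_def matrix_vector_mult_def vec_lambda_beta by (rule X)
qed

lemma wadj_row: "(wadj E w *v x) $ i = (\<Sum>k\<in>UNIV. wadj E w $ i $ k * x $ k)"
  unfolding matrix_vector_mult_def by simp

lemma hl_row:
  "(hybrid_laplacian El Eq wl wq *v x) $ i =
     (\<Sum>k\<in>UNIV. wadj El wl $ i $ k * (x$i - x$k) + wadj Eq wq $ i $ k * (x$i + x$k))"
  unfolding hybrid_laplacian_def laplacian_def signless_laplacian_def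
  by (simp add: matrix_vector_mult_add_rdistrib matrix_vector_mult_diff_rdistrib
      wdeg_row wadj_row sum_distrib_left sum_distrib_right sum.distrib sum_subtractf algebra_simps)

lemma swap_sum:
  fixes x :: "real^'n::finite"
  shows "(\<Sum>i\<in>UNIV. \<Sum>k\<in>UNIV. wadj E w $ i $ k * f (x$i) (x$k))
       = (\<Sum>i\<in>UNIV. \<Sum>k\<in>UNIV. wadj E w $ i $ k * f (x$k) (x$i))"
  apply (subst sum.swap)
  apply (simp add: wadj_sym)
  done

lemma quad:
  fixes x :: "real^'n::finite"
  shows "2 * (\<Sum>i\<in>UNIV. x$i * (hybrid_laplacian El Eq wl wq *v x) $ i) =
     (\<Sum>i\<in>UNIV. \<Sum>k\<in>UNIV. wadj El wl $ i $ k * (x$i - x$k)^2 + wadj Eq wq $ i $ k * (x$i + x$k)^2)"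
proof -
  let ?A = "\<lambda>i k. wadj El wl $ i $ k" and ?B = "\<lambda>i k. wadj Eq wq $ i $ k"
  have 1: "(\<Sum>i\<in>UNIV. x$i * (hybrid_laplacian El Eq wl wq *v x) $ i)
     = (\<Sum>i\<in>UNIV. \<Sum>k\<in>UNIV. ?A i k * (x$i * x$i - x$i * x$k) + ?B i k * (x$i*x$i + x$i*x$k))"
    by (simp add: hl_row sum_distrib_left algebra_simps)
  also have "\<dots> = (\<Sum>i\<in>UNIV. \<Sum>k\<in>UNIV. ?A i k * (x$k * x$k - x$k * x$i) + ?B i k * (x$k*x$k + x$k*x$i))"
    apply (subst sum.swap)
    apply (simp add: wadj_sym[of El wl] wadj_sym[of Eq wq])
    done
  finally have 2: "(\<Sum>i\<in>UNIV. x$i * (hybrid_laplacian El Eq wl wq *v x) $ i)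
     = (\<Sum>i\<in>UNIV. \<Sum>k\<in>UNIV. ?A i k * (x$k * x$k - x$k * x$i) + ?B i k * (x$k*x$k + x$k*x$i))" .
  have "2 * (\<Sum>i\<in>UNIV. x$i * (hybrid_laplacian El Eq wl wq *v x) $ i)
     = (\<Sum>i\<in>UNIV. \<Sum>k\<in>UNIV. ?A i k * (x$i * x$i - x$i * x$k) + ?B i k * (x$i*x$i + x$i*x$k))
     + (\<Sum>i\<in>UNIV. \<Sum>k\<in>UNIV. ?A i k * (x$k * x$k - x$k * x$i) + ?B i k * (x$k*x$k + x$k*x$i))"
    using 1 2 by simp
  also have "\<dots> = (\<Sum>i\<in>UNIV. \<Sum>k\<in>UNIV. ?A i k * (x$i - x$k)^2 + ?B i k * (x$i + x$k)^2)"
    by (simp add: sum.distrib[symmetric] power2_eq_square algebra_simps)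
  finally show ?thesis .
qed

lemma kernel_char:
  fixes x :: "real^'n::finite"
  assumes "weighted_hybrid_graph El Eq wl wq"
  shows "x \<in> mat_kernel (hybrid_laplacian El Eq wl wq) \<longleftrightarrow>
    (\<forall>i k. ({i,k} \<in> El \<longrightarrow> x$i = x$k) \<and> ({i,k} \<in> Eq \<longrightarrow> x$i = - x$k))"
proof
  have pl: "\<forall>e\<in>El. wl e > 0" and pq: "\<forall>e\<in>Eq. wq e > 0"
    using assms unfolding weighted_hybrid_graph_def by auto
  assume "x \<in> mat_kernel (hybrid_laplacian El Eq wl wq)"
  hence "hybrid_laplacian El Eq wl wq *v x = 0" by (simp add: mat_kernel_def)
  hence z: "(\<Sum>i\<in>UNIV. \<Sum>k\<in>UNIV. wadj El wl $ i $ k * (x$i - x$k)^2 + wadj Eq wq $ i $ k * (x$i + x$k)^2) = 0"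
    using quad[of x El Eq wl wq] by simp
  have nn: "\<And>i k. 0 \<le> wadj El wl $ i $ k * (x$i - x$k)^2 + wadj Eq wq $ i $ k * (x$i + x$k)^2"
    using wadj_nonneg[OF pl] wadj_nonneg[OF pq] by simp
  have "\<forall>i\<in>UNIV. (\<Sum>k\<in>UNIV. wadj El wl $ i $ k * (x$i - x$k)^2 + wadj Eq wq $ i $ k * (x$i + x$k)^2) = 0"
    using z by (subst (asm) sum_nonneg_eq_0_iff) (auto intro: sum_nonneg nn)
  hence t: "\<And>i k. wadj El wl $ i $ k * (x$i - x$k)^2 + wadj Eq wq $ i $ k * (x$i + x$k)^2 = 0"
    using nn by (simp add: sum_nonneg_eq_0_iff)
  show "\<forall>i k. ({i,k} \<in> El \<longrightarrow> x$i = x$k) \<and> ({i,k} \<in> Eq \<longrightarrow> x$i = - x$k)"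
  proof (intro allI conjI impI)
    fix i k
    have a: "wadj El wl $ i $ k * (x$i - x$k)^2 = 0" and b: "wadj Eq wq $ i $ k * (x$i + x$k)^2 = 0"
      using t[of i k] nn wadj_nonneg[OF pl, of i k] wadj_nonneg[OF pq, of i k]
      by (smt (verit) zero_le_power2 mult_nonneg_nonneg)+
    { assume "{i,k} \<in> El"
      with a wadj_pos[OF pl this] show "x$i = x$k" by simp }
    { assume "{i,k} \<in> Eq"
      with b wadj_pos[OF pq this] show "x$i = - x$k" by (simp add: add_eq_0_iff) }
  qed
next
  assume h: "\<forall>i k. ({i,k} \<in> El \<longrightarrow> x$i = x$k) \<and> ({i,k} \<in> Eq \<longrightarrow> x$i = - x$k)"
  have "\<And>i k. wadj El wl $ i $ k * (x$i - x$k) + wadj Eq wq $ i $ k * (x$i + x$k) = 0"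
    using h assms unfolding weighted_hybrid_graph_def wadj_def by auto
  hence "hybrid_laplacian El Eq wl wq *v x = 0"
    by (simp add: vec_eq_iff hl_row)
  thus "x \<in> mat_kernel (hybrid_laplacian El Eq wl wq)" by (simp add: mat_kernel_def)
qed

theorem lemma2:
  fixes E_L E_Q :: "'n::finite set set"
    and wl1 wq1 wl2 wq2 :: "'n set \<Rightarrow> real"
  assumes "weighted_hybrid_graph E_L E_Q wl1 wq1"
    and "weighted_hybrid_graph E_L E_Q wl2 wq2"
  shows "mat_kernel (hybrid_laplacian E_L E_Q wl1 wq1) = mat_kernel (hybrid_laplacian E_L E_Q wl2 wq2)"
  using kernel_char[OF assms(1)] kernel_char[OF assms(2)] by blast

end
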